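(* Let $\omega,L_0\in\mathbb{R}\setminus\{0\}$, $C_0>0$, and $a<b$ real with $b-a>\frac{2\pi}{\omega}+\frac{\pi C_0^2}{|L_0|}+2$. Let $u_1,u_2:[a,b]\to\mathbb{C}$ be solutions of $\frac{d^2u}{dx^2}+\omega^2u=0$ with $\mathrm{Im}\big(\frac{du_1}{dx}\bar u_1\big)=\mathrm{Im}\big(\frac{du_2}{dx}\bar u_2\big)=L_0\neq0$, $\sup_{[a,b]}(|u_1|+|u_2|)\le C_0$, and such that $u_1/u_2$ is not constant. Then for any $x_0\in[a,b]$ with $[x_0,x_0+\frac{2\pi}{\omega}+\frac{\pi C_0^2}{|L_0|}]\subset(a,b)$ there exist $\vartheta_2\in[0,2\pi)$, points $x_1<x_2$ in $[x_0,x_0+\frac{2\pi}{\omega}+\frac{\pi C_0^2}{|L_0|}]$, and a $C^1$, piecewise $C^2$ function $\tilde u:[a,b]\to\mathbb{C}$ such that $\frac{d^2\tilde u}{dx^2}+(\omega^2-\tilde V(x))\tilde u=0$, $\tilde u=u_1$ on $[a,x_1]$ and $\tilde u=e^{i\vartheta_2}u_2$ on $[x_2,b]$, where $\tilde V:\mathbb{R}\to[0,\omega^2]$ is $\tilde V=\omega^2$ on $[x_1,x_2]$ and $\tilde V=0$ on $\mathbb{R}\setminus[x_1,x_2]$. *)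

theory Defs
  imports "HOL-Analysis.Analysis"
begin

end

theory Submission
  imports Defs
begin


definition zf :: "complex \<Rightarrow> complex" where "zf q = \<i> * (1 + q) / (1 - q)"
definition qf :: "real \<Rightarrow> real \<Rightarrow> real \<Rightarrow> real \<Rightarrow> complex" where
  "qf w r al x = complex_of_real r * cis (2*w*x + al)"

lemma zf_Re: "q \<noteq> 1 \<Longrightarrow> Re (zf q) = -2 * Im q / (cmod (1-q))\<^sup>2"
  unfolding zf_def cmod_power2
  by (cases q) (auto simp: Re_divide field_simps power2_eq_square complex_eq_iff)

lemma zf_Im: "q \<noteq> 1 \<Longrightarrow> Im (zf q) = (1 - (cmod q)\<^sup>2) / (cmod (1-q))\<^sup>2"
  unfolding zf_def cmod_power2
  by (cases q) (auto simp: Im_divide field_simps power2_eq_square complex_eq_iff)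

lemma zf_inj: "q1 \<noteq> 1 \<Longrightarrow> q2 \<noteq> 1 \<Longrightarrow> zf q1 = zf q2 \<Longrightarrow> q1 = q2"
  unfolding zf_def by (auto simp: field_simps)

lemma cmod_1_minus_rcis: "(cmod (1 - complex_of_real r * cis t))\<^sup>2 = 1 + r\<^sup>2 - 2*r*cos t"
proof -
  have e: "sin t * sin t + cos t * cos t = 1" using sin_cos_squared_add[of t] by (simp only: power2_eq_square)
  have "(cmod (1 - complex_of_real r * cis t))\<^sup>2 = (1 - r * cos t)\<^sup>2 + (r * sin t)\<^sup>2"
    unfolding cmod_power2 by simp
  also have "\<dots> = 1 + r\<^sup>2 - 2*r*cos t" using e unfolding power2_eq_square by algebra
  finally show ?thesis .
qed

lemma Re_sq_aux:
  fixes x y D s :: real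
  assumes "D > 0" "s < 1" "D = (1-x)\<^sup>2 + y\<^sup>2" "s = x\<^sup>2 + y\<^sup>2"
  shows "(-2*y/D)\<^sup>2 = 2*((1+s)/(1-s)) * ((1-s)/D) - 1 - ((1-s)/D)\<^sup>2"
proof -
  have "(-2*y/D)\<^sup>2 = 4*y\<^sup>2/D\<^sup>2" by (simp add: power_divide power2_eq_square)
  moreover have "2*((1+s)/(1-s)) * ((1-s)/D) - 1 - ((1-s)/D)\<^sup>2 = (2*(1+s)*D - D\<^sup>2 - (1-s)\<^sup>2)/D\<^sup>2"
    using assms(1,2) by (simp add: field_simps power2_eq_square)
  moreover have "2*(1+s)*D - D\<^sup>2 - (1-s)\<^sup>2 = 4*y\<^sup>2"
    unfolding assms(3,4) by (simp add: power2_eq_square algebra_simps)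
  ultimately show ?thesis by simp
qed

lemma zf_Re_sq:
  assumes "cmod q < 1"
  shows "(Re (zf q))\<^sup>2 = 2*((1 + (cmod q)\<^sup>2)/(1 - (cmod q)\<^sup>2)) * Im (zf q) - 1 - (Im (zf q))\<^sup>2"
proof -
  have q1: "q \<noteq> 1" using assms by auto
  have D: "(cmod (1-q))\<^sup>2 > 0" using q1 by simp
  have s: "(cmod q)\<^sup>2 < 1" using assms by (simp add: abs_square_less_1)
  show ?thesis unfolding zf_Re[OF q1] zf_Im[OF q1]
    by (rule Re_sq_aux[OF D s]) (simp_all add: cmod_power2)
qed



lemma qf_periodic: "qf w r al (x + pi/w) = qf w r al x" if "w > 0" for w r al x
proof -
  have "2*w*(x + pi/w) + al = (2*w*x + al) + 2*pi" using that by (simp add: field_simps)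
  then show ?thesis unfolding qf_def by (simp add: cis_mult[symmetric])
qed

lemma cis_add_2piK: "cis (t + 2 * pi * of_int K) = cis t"
  by (simp add: cis_mult[symmetric])

lemma core1:
  fixes w r1 r2 a1 a2 x0 :: real
  assumes w: "w > 0" and r1: "0 \<le> r1" "r1 \<le> r2" "r2 < 1"
    and nq: "\<forall>x. qf w r1 a1 x \<noteq> qf w r2 a2 x"
  shows "\<exists>x1 x2. x0 \<le> x1 \<and> x1 \<le> x0 + pi/w \<and> x1 < x2 \<and>
     zf (qf w r2 a2 x2) - zf (qf w r1 a1 x1) = complex_of_real (w*(x2-x1))"
proof -
  have r2: "r2 > 0"
  proof (rule ccontr)
    assume "\<not> r2 > 0" then have "r1 = 0" "r2 = 0" using r1 by auto
    then show False using nq by (auto simp: qf_def)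
  qed
  define D1 where "D1 x = 1 + r1\<^sup>2 - 2*r1*cos(2*w*x+a1)" for x
  have D1eq: "(cmod (1 - qf w r1 a1 x))\<^sup>2 = D1 x" for x
    unfolding D1_def qf_def by (rule cmod_1_minus_rcis)
  have D1lo: "(1-r1)\<^sup>2 \<le> D1 x" for x
  proof -
    have "r1 * cos(2*w*x+a1) \<le> r1" using r1 by (simp add: mult_left_le)
    then show ?thesis unfolding D1_def by (simp add: power2_eq_square algebra_simps)
  qed
  have D1hi: "D1 x \<le> (1+r1)\<^sup>2" for x
  proof -
    have "- r1 \<le> r1 * cos(2*w*x+a1)" using r1
      by (metis cos_ge_minus_one minus_mult_right mult.right_neutral mult_left_mono neg_le_iff_le)
    then show ?thesis unfolding D1_def by (simp add: power2_eq_square algebra_simps)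
  qed
  have D1pos: "D1 x > 0" for x using D1lo[of x] r1 by (smt (verit) zero_less_power2)
  define h where "h x = (1 - r1\<^sup>2) / D1 x" for x
  have hpos: "h x > 0" for x
  proof -
    have "r1\<^sup>2 < 1" using r1 by (simp add: abs_square_less_1)
    then show ?thesis unfolding h_def using D1pos[of x] by simp
  qed
  define c where "c x = (1 + r2\<^sup>2 - (1 - r2\<^sup>2) / h x) / (2*r2)" for x
  have P: "1 - r1\<^sup>2 > 0" using r1 by (simp add: abs_square_less_1)
  have P2: "1 - r2\<^sup>2 > 0" using r1 by (simp add: abs_square_less_1)
  have hinv: "(1 - r2\<^sup>2) / h x = (1 - r2\<^sup>2) * D1 x / (1 - r1\<^sup>2)" for x
    unfolding h_def using P D1pos[of x] by (simp add: field_simps)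
  have cbd: "-1 \<le> c x \<and> c x \<le> 1" for x
  proof -
    have m: "(1-r2)*(1+r1) \<le> (1+r2)*(1-r1)" using r1 by (simp add: algebra_simps)
    have nn1: "0 \<le> (1-r2)*(1-r1)" using r1 by simp
    have nn2: "0 \<le> (1+r2)*(1+r1)" using r1 by simp
    have nn3: "0 \<le> 1 - r2\<^sup>2" using P2 by simp
    have "(1-r2)\<^sup>2 * (1 - r1\<^sup>2) = ((1-r2)*(1-r1)) * ((1-r2)*(1+r1))"
      by (simp add: power2_eq_square algebra_simps)
    also have "\<dots> \<le> ((1-r2)*(1-r1)) * ((1+r2)*(1-r1))" by (rule mult_left_mono[OF m nn1])
    also have "\<dots> = (1 - r2\<^sup>2) * (1-r1)\<^sup>2" by (simp add: power2_eq_square algebra_simps)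
    also have "\<dots> \<le> (1 - r2\<^sup>2) * D1 x" by (rule mult_left_mono[OF D1lo nn3])
    finally have lo: "(1-r2)\<^sup>2 * (1 - r1\<^sup>2) \<le> (1 - r2\<^sup>2) * D1 x" .
    have "(1 - r2\<^sup>2) * D1 x \<le> (1 - r2\<^sup>2) * (1+r1)\<^sup>2" by (rule mult_left_mono[OF D1hi nn3])
    also have "\<dots> = ((1+r2)*(1+r1)) * ((1-r2)*(1+r1))" by (simp add: power2_eq_square algebra_simps)
    also have "\<dots> \<le> ((1+r2)*(1+r1)) * ((1+r2)*(1-r1))" by (rule mult_left_mono[OF m nn2])
    also have "\<dots> = (1+r2)\<^sup>2 * (1 - r1\<^sup>2)" by (simp add: power2_eq_square algebra_simps)
    finally have hi: "(1 - r2\<^sup>2) * D1 x \<le> (1+r2)\<^sup>2 * (1 - r1\<^sup>2)" .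
    define E where "E = (1 - r2\<^sup>2) * D1 x / (1 - r1\<^sup>2)"
    have Elo: "(1-r2)\<^sup>2 \<le> E" unfolding E_def using lo P by (simp add: le_divide_eq)
    have Ehi: "E \<le> (1+r2)\<^sup>2" unfolding E_def using hi P by (simp add: divide_le_eq)
    have "c x = (1 + r2\<^sup>2 - E) / (2*r2)" unfolding c_def hinv E_def ..
    then have ce: "2*r2*c x = 1 + r2\<^sup>2 - E" using r2 by (simp add: field_simps)
    have a: "r2 * c x \<le> r2 * 1" using ce Elo by (simp add: power2_eq_square algebra_simps)
    have b: "r2 * (-1) \<le> r2 * c x" using ce Ehi by (simp add: power2_eq_square algebra_simps)
    have "-1 \<le> c x" using b r2 mult_le_cancel_left_pos[OF r2, of "-1" "c x"] by simp
    then show ?thesis using a r2 by (simp add: mult_le_cancel_left_pos)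
  qed
  define psi where "psi x = - arccos (c x)" for x
  define x2f where "x2f K x = (psi x - a2)/(2*w) + of_int K * pi / w" for K x
  define Z1 where "Z1 x = zf (qf w r1 a1 x)" for x
  define Z2 where "Z2 x = zf (complex_of_real r2 * cis (psi x))" for x
  have q2x2: "qf w r2 a2 (x2f K x) = complex_of_real r2 * cis (psi x)" for K x
  proof -
    have "2*w*x2f K x + a2 = psi x + 2*pi* of_int K" unfolding x2f_def using w by (simp add: field_simps)
    then show ?thesis unfolding qf_def by (simp add: cis_add_2piK)
  qed
  define G where "G K x = w*(x2f K x - x) - (Re (Z2 x) - Re (Z1 x))" for K x
  have GK: "G K x = G 0 x + of_int K * pi" for K x
    unfolding G_def x2f_def using w by (simp add: field_simps)
  have D1per: "D1 (x + pi/w) = D1 x" for x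
  proof -
    have e: "2*w*(x + pi/w) + a1 = (2*w*x + a1) + 2*pi" using w by (simp add: field_simps)
    show ?thesis unfolding D1_def e cos_periodic ..
  qed
  have Gper: "G K (x + pi/w) = G K x - pi" for K x
  proof -
    have p: "psi (x + pi/w) = psi x" unfolding psi_def c_def h_def D1per ..
    have z1: "Z1 (x + pi/w) = Z1 x" unfolding Z1_def qf_periodic[OF w] ..
    have z2: "Z2 (x + pi/w) = Z2 x" unfolding Z2_def p ..
    show ?thesis unfolding G_def x2f_def p z1 z2 using w by (simp add: field_simps)
  qed
  have ne2': "1 - complex_of_real r2 * cis t \<noteq> 0" for t
  proof -
    have "cmod (complex_of_real r2 * cis t) < 1" using r1 r2 by (simp add: norm_mult)
    then show ?thesis by auto
  qed
  have ne1': "1 - qf w r1 a1 x \<noteq> 0" for x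
  proof -
    have "cmod (qf w r1 a1 x) < 1" using r1 by (simp add: qf_def norm_mult)
    then show ?thesis by auto
  qed
  have cD1: "continuous_on UNIV D1" unfolding D1_def by (intro continuous_intros)
  have ch: "continuous_on UNIV h" unfolding h_def using D1pos
    by (intro continuous_intros cD1) (auto simp: less_imp_neq[symmetric])
  have cc: "continuous_on UNIV c" unfolding c_def using hpos r2
    by (intro continuous_intros ch) (auto simp: less_imp_neq[symmetric])
  have cpsi: "continuous_on UNIV psi" unfolding psi_def using cbd
    by (intro continuous_intros cc) auto
  have cZ1: "continuous_on UNIV Z1" unfolding Z1_def zf_def qf_def using ne1'[unfolded qf_def]
    by (intro continuous_intros) auto
  have cZ2: "continuous_on UNIV Z2" unfolding Z2_def zf_def using ne2'
    by (intro continuous_intros cpsi) auto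
  have Gcont: "continuous_on UNIV (G K)" for K unfolding G_def x2f_def
    using w by (intro continuous_intros cpsi cZ1 cZ2) auto
  define K where "K = \<lceil>- G 0 x0 / pi\<rceil>"
  have GKx0: "0 \<le> G K x0" "G K x0 < pi"
  proof -
    have "- G 0 x0 / pi \<le> of_int K" "of_int K < - G 0 x0 / pi + 1" unfolding K_def by linarith+
    then have "- G 0 x0 \<le> of_int K * pi" "of_int K * pi < - G 0 x0 + pi"
      using pi_gt_zero by (simp_all add: field_simps)
    then show "0 \<le> G K x0" "G K x0 < pi" unfolding GK[of K x0] by linarith+
  qed
  have "G K (x0 + pi/w) \<le> 0" using Gper[of K x0] GKx0 by linarith
  moreover have "x0 \<le> x0 + pi/w" using w by simp
  ultimately have "\<exists>x. x0 \<le> x \<and> x \<le> x0 + pi/w \<and> G K x = 0"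
    using GKx0 continuous_on_subset[OF Gcont subset_UNIV] by (intro IVT2') auto
  then obtain x1 where x1: "x0 \<le> x1" "x1 \<le> x0 + pi/w" "G K x1 = 0" by blast
  define x2 where "x2 = x2f K x1"
  have eqRe: "Re (Z2 x1) - Re (Z1 x1) = w*(x2 - x1)" using x1(3) unfolding G_def x2_def by simp
  have ne2'': "complex_of_real r2 * cis t \<noteq> 1" for t using ne2'[of t] by simp
  have ne1'': "qf w r1 a1 x \<noteq> 1" for x using ne1'[of x] by simp
  have cm1: "cmod (qf w r1 a1 x) = r1" for x using r1 by (simp add: qf_def norm_mult)
  have cm2: "cmod (complex_of_real r2 * cis t) = r2" for t using r2 by (simp add: norm_mult)
  have cpsi1: "cos (psi x1) = c x1" unfolding psi_def using cbd[of x1] by simp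
  have Im1: "Im (Z1 x1) = h x1" unfolding Z1_def zf_Im[OF ne1''] cm1 D1eq h_def ..
  have "(cmod (1 - complex_of_real r2 * cis (psi x1)))\<^sup>2 = 1 + r2\<^sup>2 - 2*r2*c x1"
    unfolding cmod_1_minus_rcis cpsi1 ..
  also have "\<dots> = (1 - r2\<^sup>2) / h x1" unfolding c_def using r2 hpos[of x1] by (simp add: field_simps)
  finally have D2: "(cmod (1 - complex_of_real r2 * cis (psi x1)))\<^sup>2 = (1 - r2\<^sup>2) / h x1" .
  have Im2: "Im (Z2 x1) = h x1" unfolding Z2_def zf_Im[OF ne2''] cm2 D2
    using P2 hpos[of x1] by (simp add: field_simps)
  have eqIm: "Im (Z2 x1) = Im (Z1 x1)" using Im1 Im2 by simp
  have Re2nn: "Re (Z2 x1) \<ge> 0"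
  proof -
    have "sin (arccos (c x1)) \<ge> 0" using cbd[of x1] arccos_bounded[of "c x1"] by (intro sin_ge_zero) auto
    then have "- (2 * Im (complex_of_real r2 * cis (psi x1))) \<ge> 0" unfolding psi_def using r2 by simp
    then show ?thesis unfolding Z2_def zf_Re[OF ne2''] by (simp add: divide_nonpos_nonneg)
  qed
  have k12: "(1 + r1\<^sup>2)/(1 - r1\<^sup>2) \<le> (1 + r2\<^sup>2)/(1 - r2\<^sup>2)"
  proof -
    have "r1\<^sup>2 \<le> r2\<^sup>2" using r1 by (simp add: power_mono)
    then have "(1 + r1\<^sup>2)*(1 - r2\<^sup>2) \<le> (1 + r2\<^sup>2)*(1 - r1\<^sup>2)" by (simp add: algebra_simps)
    then show ?thesis using P P2 by (simp add: field_simps)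
  qed
  have Rele: "Re (Z1 x1) \<le> Re (Z2 x1)"
  proof -
    have lt1: "cmod (qf w r1 a1 x1) < 1" using cm1 r1 by simp
    have lt2: "cmod (complex_of_real r2 * cis (psi x1)) < 1" using cm2 r1 by simp
    have s1: "(Re (Z1 x1))\<^sup>2 = 2*((1 + r1\<^sup>2)/(1 - r1\<^sup>2)) * h x1 - 1 - (h x1)\<^sup>2"
      using zf_Re_sq[OF lt1] unfolding Z1_def[symmetric] cm1 Im1 .
    have s2: "(Re (Z2 x1))\<^sup>2 = 2*((1 + r2\<^sup>2)/(1 - r2\<^sup>2)) * h x1 - 1 - (h x1)\<^sup>2"
      using zf_Re_sq[OF lt2] unfolding Z2_def[symmetric] cm2 Im2 .
    have kk: "2*((1 + r1\<^sup>2)/(1 - r1\<^sup>2)) * h x1 \<le> 2*((1 + r2\<^sup>2)/(1 - r2\<^sup>2)) * h x1"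
      using hpos[of x1] k12 by (intro mult_right_mono mult_left_mono) auto
    have "(Re (Z1 x1))\<^sup>2 \<le> (Re (Z2 x1))\<^sup>2" unfolding s1 s2 using kk by linarith
    then show ?thesis using Re2nn by (rule power2_le_imp_le)
  qed
  have Z2x2: "zf (qf w r2 a2 x2) = Z2 x1" unfolding x2_def q2x2 Z2_def ..
  have ne1: "qf w r1 a1 x \<noteq> 1" for x
  proof -
    have "cmod (qf w r1 a1 x) < 1" using r1 by (simp add: qf_def norm_mult)
    then show ?thesis by auto
  qed
  have ne2: "qf w r2 a2 x \<noteq> 1" for x
  proof -
    have "cmod (qf w r2 a2 x) < 1" using r1 r2 by (simp add: qf_def norm_mult)
    then show ?thesis by auto
  qed
  have "0 \<le> w*(x2-x1)" using eqRe Rele by linarith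
  then have ge: "x1 \<le> x2" using w by (simp add: zero_le_mult_iff)
  have "x1 \<noteq> x2"
  proof
    assume "x1 = x2"
    then have "Z2 x1 = Z1 x1" using eqRe eqIm w by (simp add: complex_eq_iff)
    then have "zf (qf w r2 a2 x1) = zf (qf w r1 a1 x1)" using Z2x2 \<open>x1 = x2\<close> unfolding Z1_def by simp
    then show False using zf_inj[OF ne2 ne1] nq by metis
  qed
  then have "x1 < x2" using ge by simp
  moreover have "zf (qf w r2 a2 x2) - zf (qf w r1 a1 x1) = complex_of_real (w*(x2-x1))"
    unfolding Z2x2 using eqRe eqIm unfolding Z1_def by (simp add: complex_eq_iff)
  ultimately show ?thesis using x1 by blast
qed



lemma zf_cnj: "zf (cnj q) = - cnj (zf q)"
  unfolding zf_def by (simp add: complex_cnj_divide)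

lemma qf_neg: "qf w r (-a) x = cnj (qf w r a (-x))"
  unfolding qf_def by (simp add: cis_cnj)

lemma core2:
  fixes w r1 r2 a1 a2 x0 X :: real
  assumes w: "w > 0" and r: "0 \<le> r1" "r1 < 1" "0 \<le> r2" "r2 < 1"
    and nq: "\<forall>x. qf w r1 a1 x \<noteq> qf w r2 a2 x"
  shows "\<exists>x1 x2. x1 < x2 \<and>
     zf (qf w r2 a2 x2) - zf (qf w r1 a1 x1) = complex_of_real (w*(x2-x1)) \<and>
     ((x0 \<le> x1 \<and> x1 \<le> x0 + pi/w) \<or> (X - pi/w \<le> x2 \<and> x2 \<le> X))"
proof (cases "r1 \<le> r2")
  case True
  then show ?thesis using core1[OF w r(1) True r(4) nq, of x0] by blast
next
  case False
  have nq': "\<forall>x. qf w r2 (-a2) x \<noteq> qf w r1 (-a1) x"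
  proof
    fix x show "qf w r2 (-a2) x \<noteq> qf w r1 (-a1) x"
      unfolding qf_neg using nq[rule_format, of "-x"] by (metis complex_cnj_cnj)
  qed
  obtain y1 y2 where y: "-X \<le> y1" "y1 \<le> -X + pi/w" "y1 < y2"
    "zf (qf w r1 (-a1) y2) - zf (qf w r2 (-a2) y1) = complex_of_real (w*(y2-y1))"
    using core1[OF w r(3) _ r(2) nq', of "-X"] False by auto
  have "cnj (zf (qf w r2 a2 (-y1)) - zf (qf w r1 a1 (-y2))) = complex_of_real (w*(y2-y1))"
    using y(4) unfolding qf_neg zf_cnj by simp
  then have "zf (qf w r2 a2 (-y1)) - zf (qf w r1 a1 (-y2)) = complex_of_real (w*((-y1)-(-y2)))"
    by (metis complex_cnj_cnj complex_cnj_complex_of_real diff_minus_eq_add uminus_add_conv_diff)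
  moreover have "X - pi/w \<le> -y1" "-y1 \<le> X" using y by auto
  moreover have "-y2 < -y1" using y by auto
  ultimately show ?thesis by blast
qed



lemma cis_lin_deriv:
  "((\<lambda>x. cis (k*x)) has_vector_derivative (\<i> * complex_of_real k * cis (k*x))) (at x within S)"
proof -
  have "((\<lambda>x. cis (k*x)) has_derivative (\<lambda>t. (k*t) *\<^sub>R (\<i> * cis (k*x)))) (at x within S)"
    by (intro has_derivative_cis derivative_intros)
  then show ?thesis unfolding has_vector_derivative_def
    by (rule has_derivative_eq_rhs) (auto simp: scaleR_conv_of_real algebra_simps)
qed

lemma ode_AB:
  fixes u u' :: "real \<Rightarrow> complex" and w a b :: real
  assumes w: "w > 0"
    and d1: "\<And>x. x \<in> {a..b} \<Longrightarrow> (u has_vector_derivative u' x) (at x within {a..b})"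
    and d2: "\<And>x. x \<in> {a..b} \<Longrightarrow> (u' has_vector_derivative (- (complex_of_real (w\<^sup>2) * u x))) (at x within {a..b})"
  shows "\<exists>A B. \<forall>x\<in>{a..b}. u x = A * cis (w*x) + B * cis (-w*x) \<and>
            u' x = \<i> * complex_of_real w * (A * cis (w*x) - B * cis (-w*x))"
proof -
  define FA where "FA x = (complex_of_real w * u x - \<i> * u' x) * cis (-w*x)" for x
  define FB where "FB x = (complex_of_real w * u x + \<i> * u' x) * cis (w*x)" for x
  have "(FA has_vector_derivative 0) (at x within {a..b})" if "x \<in> {a..b}" for x
    unfolding FA_def
    by (rule derivative_eq_intros d1[OF that] d2[OF that] cis_lin_deriv refl)+
       (simp add: algebra_simps power2_eq_square)
  then obtain cA where cA: "\<And>x. x \<in> {a..b} \<Longrightarrow> FA x = cA"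
    using has_vector_derivative_zero_constant[of "{a..b}" FA] by auto
  have "(FB has_vector_derivative 0) (at x within {a..b})" if "x \<in> {a..b}" for x
    unfolding FB_def
    by (rule derivative_eq_intros d1[OF that] d2[OF that] cis_lin_deriv refl)+
       (simp add: algebra_simps power2_eq_square)
  then obtain cB where cB: "\<And>x. x \<in> {a..b} \<Longrightarrow> FB x = cB"
    using has_vector_derivative_zero_constant[of "{a..b}" FB] by auto
  define A where "A = cA / (2 * complex_of_real w)"
  define B where "B = cB / (2 * complex_of_real w)"
  have "u x = A * cis (w*x) + B * cis (-w*x) \<and>
            u' x = \<i> * complex_of_real w * (A * cis (w*x) - B * cis (-w*x))" if x: "x \<in> {a..b}" for x
  proof -
    have cc: "cis (w*x) * cis (-w*x) = 1" by (simp add: cis_mult)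
    have ea: "complex_of_real w * u x - \<i> * u' x = cA * cis (w*x)"
      unfolding cA[OF x, symmetric] FA_def by (simp add: mult.assoc cis_mult)
    have eb: "complex_of_real w * u x + \<i> * u' x = cB * cis (-w*x)"
      unfolding cB[OF x, symmetric] FB_def by (simp add: mult.assoc cis_mult)
    have wne: "complex_of_real w \<noteq> 0" using w by simp
    have s1: "2 * complex_of_real w * u x = cA * cis (w*x) + cB * cis (-w*x)" using ea eb by algebra
    have s2: "2 * \<i> * u' x = cB * cis (-w*x) - cA * cis (w*x)" using ea eb by algebra
    have "u x = A * cis (w*x) + B * cis (-w*x)" unfolding A_def B_def using s1 wne
      by (simp add: field_simps)
    moreover have "u' x = \<i> * complex_of_real w * (A * cis (w*x) - B * cis (-w*x))"
    proof -
      have ii: "\<i> * \<i> = (-1::complex)" by simp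
      have s3: "2 * u' x = \<i> * (cA * cis (w*x) - cB * cis (-w*x))" using s2 ii by algebra
      have e1: "u' x = \<i> * (cA * cis (w*x) - cB * cis (-w*x)) / 2" using s3 by (simp add: mult.commute)
      have e2: "\<i> * complex_of_real w * (cA / (2 * complex_of_real w) * cis (w*x) - cB / (2 * complex_of_real w) * cis (-w*x))
          = \<i> * (cA * cis (w*x) - cB * cis (-w*x)) / 2" using wne by (simp add: field_simps)
      show ?thesis unfolding A_def B_def e1 e2 ..
    qed
    ultimately show ?thesis ..
  qed
  then show ?thesis by blast
qed



lemma Im_UU:
  fixes A B :: complex and w x :: real
  shows "Im ((\<i> * complex_of_real w * (A * cis (w*x) - B * cis (-w*x))) * cnj (A * cis (w*x) + B * cis (-w*x)))
         = w * ((cmod A)\<^sup>2 - (cmod B)\<^sup>2)"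
proof -
  define c where "c = cis (w*x)"
  define d where "d = cis (-w*x)"
  have cd: "c * d = 1" unfolding c_def d_def by (simp add: cis_mult)
  have cc: "cnj c = d" "cnj d = c" unfolding c_def d_def by (simp_all add: cis_cnj)
  define Z where "Z = A * cnj B * c * c"
  have cZ: "cnj Z = cnj A * B * d * d" unfolding Z_def by (simp add: cc)
  have key: "(\<i> * complex_of_real w * (A * c - B * d)) * cnj (A * c + B * d)
      = \<i> * complex_of_real w * ((A * cnj A - B * cnj B) + (Z - cnj Z))"
  proof -
    have "(A*c - B*d)*(cnj A*d + cnj B*c) = (A * cnj A - B * cnj B) + (A * cnj B * c * c - cnj A * B * d * d)"
      using cd by algebra
    then show ?thesis unfolding cZ unfolding Z_def by (simp add: cc)
  qed
  have nA: "A * cnj A = complex_of_real ((cmod A)\<^sup>2)" by (rule complex_norm_square[symmetric])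
  have nB: "B * cnj B = complex_of_real ((cmod B)\<^sup>2)" by (rule complex_norm_square[symmetric])
  have "Im (\<i> * complex_of_real w * ((A * cnj A - B * cnj B) + (Z - cnj Z))) = w * ((cmod A)\<^sup>2 - (cmod B)\<^sup>2)"
    unfolding nA nB by simp
  then have "Im ((\<i> * complex_of_real w * (A * c - B * d)) * cnj (A * c + B * d)) = w * ((cmod A)\<^sup>2 - (cmod B)\<^sup>2)"
    unfolding key .
  then show ?thesis unfolding c_def d_def .
qed

lemma qf_Q: "qf w (cmod Q) (Arg Q) x = Q * cis (2*w*x)"
proof -
  have "qf w (cmod Q) (Arg Q) x = rcis (cmod Q) (Arg Q) * cis (2*w*x)"
    unfolding qf_def rcis_def by (simp add: cis_mult[symmetric] mult.commute add.commute)
  then show ?thesis by (simp add: rcis_cmod_Arg)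
qed

lemma zf_U:
  fixes A B :: complex and w x :: real
  assumes "B \<noteq> 0" "cmod A < cmod B" "w \<noteq> 0"
  shows "\<i> * complex_of_real w * (A * cis (w*x) - B * cis (-w*x)) \<noteq> 0"
    and "zf ((A/B) * cis (2*w*x)) = complex_of_real w * (A * cis (w*x) + B * cis (-w*x)) /
              (\<i> * complex_of_real w * (A * cis (w*x) - B * cis (-w*x)))"
proof -
  define c where "c = cis (w*x)"
  have c0: "c \<noteq> 0" unfolding c_def by simp
  have d: "cis (-w*x) = inverse c" unfolding c_def by (simp add: cis_inverse[symmetric] del: cis_inverse)
  have c2: "cis (2*w*x) = c * c" unfolding c_def by (simp add: cis_mult mult.assoc)
  have cm: "cmod c = 1" unfolding c_def by simp
  have ne: "B - A * c * c \<noteq> 0"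
  proof
    assume "B - A * c * c = 0"
    then have "cmod B = cmod (A * c * c)" by simp
    also have "\<dots> = cmod A" by (simp add: norm_mult cm)
    finally show False using assms(2) by simp
  qed
  have ne2: "A * c * c - B \<noteq> 0" using ne by (metis eq_iff_diff_eq_0)
  have wne: "complex_of_real w \<noteq> 0" using assms by simp
  have U'ne: "A * c - B * inverse c \<noteq> 0"
  proof
    assume "A * c - B * inverse c = 0"
    then have "(A * c - B * inverse c) * c = 0" by simp
    then have "A * c * c - B = 0" using c0 by (simp add: algebra_simps)
    then show False using ne2 by simp
  qed
  show "\<i> * complex_of_real w * (A * cis (w*x) - B * cis (-w*x)) \<noteq> 0"
    unfolding d c_def[symmetric] using U'ne wne by simp
  show "zf ((A/B) * cis (2*w*x)) = complex_of_real w * (A * cis (w*x) + B * cis (-w*x)) /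
              (\<i> * complex_of_real w * (A * cis (w*x) - B * cis (-w*x)))"
    unfolding d c2 c_def[symmetric] zf_def using c0 assms(1) ne ne2 wne U'ne
    by (simp add: field_simps)
qed



lemma deriv_within_Un:
  assumes "(f has_vector_derivative D) (at c within S)" "(f has_vector_derivative D) (at c within T)"
  shows "(f has_vector_derivative D) (at c within S \<union> T)"
  using assms unfolding has_vector_derivative_def has_derivative_within Lim_within_Un by blast

lemma glue_at:
  fixes f g :: "real \<Rightarrow> complex"
  assumes c: "c \<in> S"
    and f: "(f has_vector_derivative D) (at c within S \<inter> {..c})"
    and g: "(g has_vector_derivative D) (at c within S \<inter> {c..})"
    and fg: "f c = g c"
  shows "((\<lambda>x. if x \<le> c then f x else g x) has_vector_derivative D) (at c within S)"
proof -
  let ?h = "\<lambda>x. if x \<le> c then f x else g x"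
  have h1: "(?h has_vector_derivative D) (at c within S \<inter> {..c})"
    by (rule has_vector_derivative_transform[OF _ _ f]) (use c in auto)
  have h2: "(?h has_vector_derivative D) (at c within S \<inter> {c..})"
    by (rule has_vector_derivative_transform[OF _ _ g]) (use c fg in auto)
  have "S = S \<inter> {..c} \<union> S \<inter> {c..}" by auto
  then show ?thesis using deriv_within_Un[OF h1 h2] by simp
qed



lemma ratio_bound:
  fixes v v' :: complex
  assumes "\<bar>L\<bar> \<le> cmod v * cmod v'" "L \<noteq> 0" "cmod v \<le> C" "w > 0"
  shows "cmod (complex_of_real w * v / v') \<le> w * C\<^sup>2 / \<bar>L\<bar>"
proof -
  have L: "\<bar>L\<bar> > 0" using assms(2) by simp
  have p: "0 < cmod v * cmod v'" using assms(1) L by linarith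
  have v': "cmod v' > 0" using p by (auto simp: zero_less_mult_iff)
  have v: "cmod v > 0" using p by (auto simp: zero_less_mult_iff)
  have "cmod v / cmod v' \<le> (cmod v)\<^sup>2 / \<bar>L\<bar>"
  proof -
    have "\<bar>L\<bar> * cmod v \<le> cmod v * cmod v' * cmod v" using assms(1) v by (simp add: mult_right_mono)
    then show ?thesis using v' L by (simp add: divide_le_eq le_divide_eq power2_eq_square algebra_simps)
  qed
  also have "\<dots> \<le> C\<^sup>2 / \<bar>L\<bar>" using assms(3) v L by (intro divide_right_mono power_mono) auto
  finally have "cmod v / cmod v' \<le> C\<^sup>2 / \<bar>L\<bar>" .
  then have "w * (cmod v / cmod v') \<le> w * (C\<^sup>2 / \<bar>L\<bar>)" using assms(4) by (intro mult_left_mono) auto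
  moreover have e: "cmod (complex_of_real w * v / v') = w * (cmod v / cmod v')"
    using assms(4) by (simp add: norm_mult norm_divide)
  ultimately show ?thesis unfolding e times_divide_eq_right[symmetric] by simp
qed

lemma Im_ratio:
  fixes v v' :: complex
  assumes "Im (v' * cnj v) = L" "v' \<noteq> 0"
  shows "Im (v / v') = - L / (cmod v')\<^sup>2"
proof -
  have "v / v' = v * cnj v' / complex_of_real ((cmod v')\<^sup>2)"
    unfolding complex_norm_square using assms(2) by (simp add: field_simps)
  moreover have "Im (v * cnj v') = - L"
  proof -
    have "Im (v * cnj v') = Im (cnj (v' * cnj v))" by simp
    also have "\<dots> = - L" using assms(1) by (simp del: complex_cnj_mult)
    finally show ?thesis .
  qed
  ultimately show ?thesis by (simp add: Im_divide_of_real)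
qed



lemma main_neg:
  fixes \<omega> L0 C0 a b x0 :: real
    and u1 u1' u2 u2' :: "real \<Rightarrow> complex"
  defines "T \<equiv> 2 * pi / \<bar>\<omega>\<bar> + pi * C0\<^sup>2 / \<bar>L0\<bar>"
  assumes om: "\<omega> \<noteq> 0" and "L0 \<noteq> 0" and C0: "C0 > 0" and "a < b"
    and "b - a > T + 2"
    and u1_d1: "\<And>x. x \<in> {a..b} \<Longrightarrow> (u1 has_vector_derivative u1' x) (at x within {a..b})"
    and u1_d2: "\<And>x. x \<in> {a..b} \<Longrightarrow>
                  (u1' has_vector_derivative (- (complex_of_real (\<omega>\<^sup>2) * u1 x))) (at x within {a..b})"
    and u2_d1: "\<And>x. x \<in> {a..b} \<Longrightarrow> (u2 has_vector_derivative u2' x) (at x within {a..b})"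
    and u2_d2: "\<And>x. x \<in> {a..b} \<Longrightarrow>
                  (u2' has_vector_derivative (- (complex_of_real (\<omega>\<^sup>2) * u2 x))) (at x within {a..b})"
    and L1: "\<And>x. x \<in> {a..b} \<Longrightarrow> Im (u1' x * cnj (u1 x)) = L0"
    and L2: "\<And>x. x \<in> {a..b} \<Longrightarrow> Im (u2' x * cnj (u2 x)) = L0"
    and bound: "\<And>x. x \<in> {a..b} \<Longrightarrow> cmod (u1 x) + cmod (u2 x) \<le> C0"
    and nonconst: "\<not> (\<exists>c. \<forall>x\<in>{a..b}. u1 x / u2 x = c)"
    and x0: "x0 \<in> {a..b}" and sub: "{x0..x0 + T} \<subseteq> {a<..<b}"
    and neg: "L0 < 0"
  shows "\<exists>\<theta>2 x1 x2 ut ut'.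
           \<theta>2 \<in> {0..<2*pi} \<and> x1 < x2 \<and> x1 \<in> {x0..x0 + T} \<and> x2 \<in> {x0..x0 + T} \<and>
           (\<forall>x\<in>{a..b}. (ut has_vector_derivative ut' x) (at x within {a..b})) \<and>
           continuous_on {a..b} ut' \<and>
           (\<forall>x\<in>{a..b} - {x1, x2}.
              (ut' has_vector_derivative
                 (- (complex_of_real (\<omega>\<^sup>2 - (if x \<in> {x1..x2} then \<omega>\<^sup>2 else 0)) * ut x)))
                (at x within {a..b})) \<and>
           (\<forall>x\<in>{a..x1}. ut x = u1 x) \<and>
           (\<forall>x\<in>{x2..b}. ut x = exp (\<i> * complex_of_real \<theta>2) * u2 x)"
proof -
  define w where "w = \<bar>\<omega>\<bar>"
  have w: "w > 0" using om by (simp add: w_def)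
  have w2: "\<omega>\<^sup>2 = w\<^sup>2" by (simp add: w_def)
  have Tw: "T = 2*pi/w + pi*C0\<^sup>2/\<bar>L0\<bar>" unfolding T_def w_def ..
  have L0a: "\<bar>L0\<bar> > 0" using neg by simp
  have Tge: "pi/w + 2*C0\<^sup>2/\<bar>L0\<bar> \<le> T"
  proof -
    have "pi/w \<le> 2*pi/w" using w by (simp add: divide_right_mono)
    moreover have "2*C0\<^sup>2/\<bar>L0\<bar> \<le> pi*C0\<^sup>2/\<bar>L0\<bar>"
      using pi_gt3 L0a by (intro divide_right_mono mult_right_mono) auto
    ultimately show ?thesis unfolding Tw by linarith
  qed
  have Tpos: "0 \<le> 2*C0\<^sup>2/\<bar>L0\<bar>" using L0a by simp
  have piw: "pi/w > 0" using w by simp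
  have inab: "x \<in> {a..b}" if "x0 \<le> x" "x \<le> x0 + T" for x using sub that by auto
  obtain A1 B1 where AB1: "\<And>x. x\<in>{a..b} \<Longrightarrow> u1 x = A1 * cis (w*x) + B1 * cis (-w*x) \<and>
      u1' x = \<i> * complex_of_real w * (A1 * cis (w*x) - B1 * cis (-w*x))"
    using ode_AB[OF w, of a b u1 u1'] u1_d1 u1_d2 unfolding w2 by blast
  obtain A2 B2 where AB2: "\<And>x. x\<in>{a..b} \<Longrightarrow> u2 x = A2 * cis (w*x) + B2 * cis (-w*x) \<and>
      u2' x = \<i> * complex_of_real w * (A2 * cis (w*x) - B2 * cis (-w*x))"
    using ode_AB[OF w, of a b u2 u2'] u2_d1 u2_d2 unfolding w2 by blast
  have LA1: "L0 = w * ((cmod A1)\<^sup>2 - (cmod B1)\<^sup>2)" using L1[OF x0] AB1[OF x0] Im_UU by metis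
  have LA2: "L0 = w * ((cmod A2)\<^sup>2 - (cmod B2)\<^sup>2)" using L2[OF x0] AB2[OF x0] Im_UU by metis
  have lt1: "cmod A1 < cmod B1"
  proof -
    have "(cmod A1)\<^sup>2 < (cmod B1)\<^sup>2" using LA1 neg w by (simp add: mult_less_0_iff)
    then show ?thesis by (rule power_less_imp_less_base) simp
  qed
  have lt2: "cmod A2 < cmod B2"
  proof -
    have "(cmod A2)\<^sup>2 < (cmod B2)\<^sup>2" using LA2 neg w by (simp add: mult_less_0_iff)
    then show ?thesis by (rule power_less_imp_less_base) simp
  qed
  have B1: "B1 \<noteq> 0" using lt1 by auto
  have B2: "B2 \<noteq> 0" using lt2 by auto
  define r1 where "r1 = cmod (A1/B1)"
  define al1 where "al1 = Arg (A1/B1)"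
  define r2 where "r2 = cmod (A2/B2)"
  define al2 where "al2 = Arg (A2/B2)"
  have r1: "0 \<le> r1" "r1 < 1" unfolding r1_def using lt1 B1 by (auto simp: norm_divide divide_less_eq)
  have r2: "0 \<le> r2" "r2 < 1" unfolding r2_def using lt2 B2 by (auto simp: norm_divide divide_less_eq)
  have wne: "w \<noteq> 0" using w by simp
  have Z1: "zf (qf w r1 al1 x) = complex_of_real w * (A1 * cis (w*x) + B1 * cis (-w*x)) /
              (\<i> * complex_of_real w * (A1 * cis (w*x) - B1 * cis (-w*x)))" for x
    unfolding r1_def al1_def qf_Q using zf_U(2)[OF B1 lt1 wne] .
  have Z2: "zf (qf w r2 al2 x) = complex_of_real w * (A2 * cis (w*x) + B2 * cis (-w*x)) /
              (\<i> * complex_of_real w * (A2 * cis (w*x) - B2 * cis (-w*x)))" for x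
    unfolding r2_def al2_def qf_Q using zf_U(2)[OF B2 lt2 wne] .
  have Z1u: "zf (qf w r1 al1 x) = complex_of_real w * u1 x / u1' x" if "x \<in> {a..b}" for x
    using Z1[of x] AB1[OF that] by simp
  have Z2u: "zf (qf w r2 al2 x) = complex_of_real w * u2 x / u2' x" if "x \<in> {a..b}" for x
    using Z2[of x] AB2[OF that] by simp
  have nz: "u1 x \<noteq> 0" "u2 x \<noteq> 0" "u1' x \<noteq> 0" "u2' x \<noteq> 0" if "x \<in> {a..b}" for x
    using L1[OF that] L2[OF that] neg by auto
  have nq: "\<forall>x. qf w r1 al1 x \<noteq> qf w r2 al2 x"
  proof
    fix x show "qf w r1 al1 x \<noteq> qf w r2 al2 x"
    proof
      assume eq: "qf w r1 al1 x = qf w r2 al2 x"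
      then have "A1/B1 = A2/B2" unfolding r1_def al1_def r2_def al2_def qf_Q
        by (metis cis_neq_zero mult_cancel_right)
      then have A1: "A1 = (A2/B2) * B1" using B1 by (simp add: field_simps)
      have "\<forall>y\<in>{a..b}. u1 y / u2 y = B1/B2"
      proof
        fix y assume y: "y \<in> {a..b}"
        have "u1 y = (B1/B2) * u2 y" using AB1[OF y] AB2[OF y] A1 B2 by (simp add: field_simps)
        then show "u1 y / u2 y = B1/B2" using nz(2)[OF y] by simp
      qed
      then show False using nonconst by blast
    qed
  qed
  obtain x1 x2 where xx: "x1 < x2"
    and eqz: "zf (qf w r2 al2 x2) - zf (qf w r1 al1 x1) = complex_of_real (w*(x2-x1))"
    and loc: "(x0 \<le> x1 \<and> x1 \<le> x0 + pi/w) \<or> (x0 + T - pi/w \<le> x2 \<and> x2 \<le> x0 + T)"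
    using core2[OF w r1 r2 nq, of x0 "x0 + T"] by blast
  have zb: "cmod (zf (qf w r al x)) \<le> w * C0\<^sup>2 / \<bar>L0\<bar>"
    if rr: "(r = r1 \<and> al = al1) \<or> (r = r2 \<and> al = al2)" for r al x
  proof -
    define n where "n = \<lfloor>(x - x0) * w / pi\<rfloor>"
    define y where "y = x - of_int n * pi / w"
    have n1: "of_int n \<le> (x-x0)*w/pi" "(x-x0)*w/pi < of_int n + 1" unfolding n_def by linarith+
    have n2: "of_int n * pi \<le> (x-x0)*w" "(x-x0)*w < (of_int n + 1) * pi"
      using n1 pi_gt_zero by (simp_all add: field_simps)
    have n3: "of_int n * pi / w \<le> x - x0" using n2(1) w by (simp add: pos_divide_le_eq)
    have n4: "x - x0 < (of_int n + 1) * pi / w" using n2(2) w by (simp add: pos_less_divide_eq)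
    have n5: "(of_int n + 1) * pi / w = of_int n * pi / w + pi / w" by (simp add: distrib_right add_divide_distrib)
    have y1: "x0 \<le> y" "y \<le> x0 + pi/w" unfolding y_def using n3 n4 n5 by linarith+
    have "y \<le> x0 + T" using y1 Tge Tpos by linarith
    then have yab: "y \<in> {a..b}" using y1 inab by blast
    have qy: "qf w r al y = qf w r al x"
    proof -
      have "2*w*y + al = (2*w*x + al) + 2 * pi * of_int (-n)" unfolding y_def using w by (simp add: field_simps)
      then show ?thesis unfolding qf_def by (simp only: cis_add_2piK)
    qed
    have key: "cmod (complex_of_real w * v / v') \<le> w * C0\<^sup>2 / \<bar>L0\<bar>"
      if "Im (v' * cnj v) = L0" "cmod v \<le> C0" for v v'
    proof (rule ratio_bound)
      have "\<bar>L0\<bar> \<le> cmod (v' * cnj v)" using that(1) abs_Im_le_cmod by metis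
      then show "\<bar>L0\<bar> \<le> cmod v * cmod v'" by (simp add: norm_mult mult.commute)
    qed (use that neg w in auto)
    show ?thesis
    proof (cases "r = r1 \<and> al = al1")
      case True
      have "cmod (u1 y) \<le> C0" using bound[OF yab] by (smt (verit) norm_ge_zero)
      then show ?thesis using key[OF L1[OF yab]] True qy Z1u[OF yab] by simp
    next
      case False
      then have F: "r = r2 \<and> al = al2" using rr by blast
      have "cmod (u2 y) \<le> C0" using bound[OF yab] by (smt (verit) norm_ge_zero)
      then show ?thesis using key[OF L2[OF yab]] F qy Z2u[OF yab] by simp
    qed
  qed
  have dle: "x2 - x1 \<le> 2*C0\<^sup>2/\<bar>L0\<bar>"
  proof -
    have "w*(x2-x1) = Re (zf (qf w r2 al2 x2) - zf (qf w r1 al1 x1))" unfolding eqz by simp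
    also have "\<dots> \<le> cmod (zf (qf w r2 al2 x2) - zf (qf w r1 al1 x1))" by (rule complex_Re_le_cmod)
    also have "\<dots> \<le> cmod (zf (qf w r2 al2 x2)) + cmod (zf (qf w r1 al1 x1))" by (rule norm_triangle_ineq4)
    also have "\<dots> \<le> w * C0\<^sup>2 / \<bar>L0\<bar> + w * C0\<^sup>2 / \<bar>L0\<bar>" using zb by (intro add_mono) auto
    also have "\<dots> = w * (2*C0\<^sup>2/\<bar>L0\<bar>)" by simp
    finally have "w*(x2-x1) \<le> w * (2*C0\<^sup>2/\<bar>L0\<bar>)" .
    then show ?thesis using w by (simp only: mult_le_cancel_left_pos)
  qed
  have x1T: "x1 \<in> {x0..x0+T}" and x2T: "x2 \<in> {x0..x0+T}"
    using loc xx dle Tge piw Tpos by auto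
  have x1ab: "x1 \<in> {a..b}" and x2ab: "x2 \<in> {a..b}" using x1T x2T inab by auto
  define z1 where "z1 = u1 x1 / u1' x1"
  define z2 where "z2 = u2 x2 / u2' x2"
  have "complex_of_real w * z2 - complex_of_real w * z1 = complex_of_real w * complex_of_real (x2 - x1)"
    using eqz Z1u[OF x1ab] Z2u[OF x2ab] unfolding z1_def z2_def times_divide_eq_right[symmetric]
    by (simp add: of_real_mult)
  then have "complex_of_real w * (z2 - z1) = complex_of_real w * complex_of_real (x2 - x1)"
    by (simp add: right_diff_distrib)
  then have ez: "z2 - z1 = complex_of_real (x2 - x1)" using wne by simp
  have "Im z2 = Im z1" using arg_cong[OF ez, of Im] by simp
  moreover have "Im z1 = - L0 / (cmod (u1' x1))\<^sup>2" unfolding z1_def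
    by (rule Im_ratio[OF L1[OF x1ab] nz(3)[OF x1ab]])
  moreover have "Im z2 = - L0 / (cmod (u2' x2))\<^sup>2" unfolding z2_def
    by (rule Im_ratio[OF L2[OF x2ab] nz(4)[OF x2ab]])
  ultimately have "- L0 / (cmod (u1' x1))\<^sup>2 = - L0 / (cmod (u2' x2))\<^sup>2" by linarith
  moreover have "(cmod (u1' x1))\<^sup>2 > 0" "(cmod (u2' x2))\<^sup>2 > 0" using nz x1ab x2ab by auto
  ultimately have "(cmod (u1' x1))\<^sup>2 = (cmod (u2' x2))\<^sup>2" using neg
    by (simp add: field_simps)
  then have cmeq: "cmod (u1' x1) = cmod (u2' x2)" by (simp add: power2_eq_iff_nonneg)
  define p where "p = u1' x1 / u2' x2"
  have p1: "cmod p = 1" unfolding p_def using cmeq nz(4)[OF x2ab] by (simp add: norm_divide)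
  have p0: "p \<noteq> 0" using p1 by auto
  have cisA: "cis (Arg p) = p" using cis_Arg[OF p0] p1 by (simp add: sgn_div_norm)
  define th where "th = (if 0 \<le> Arg p then Arg p else Arg p + 2*pi)"
  have th: "th \<in> {0..<2*pi}" unfolding th_def using Arg_bounded[of p] by auto
  have thp: "exp (\<i> * complex_of_real th) = p"
  proof -
    have "cis th = p" unfolding th_def using cisA by (simp add: cis_mult[symmetric])
    then show ?thesis by (simp add: cis_conv_exp)
  qed
  have mp1: "p * u2' x2 = u1' x1" unfolding p_def using nz(4)[OF x2ab] by simp
  have u2x2: "u2 x2 = u2' x2 * (z1 + complex_of_real (x2 - x1))"
    using ez nz(4)[OF x2ab] unfolding z2_def by (simp add: field_simps)
  have mp0: "p * u2 x2 = u1 x1 + complex_of_real (x2 - x1) * u1' x1"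
    unfolding u2x2 p_def z1_def using nz(3)[OF x1ab] nz(4)[OF x2ab] by (simp add: field_simps)
  define L where "L = (\<lambda>x. u1 x1 + complex_of_real (x - x1) * u1' x1)"
  define g where "g = (\<lambda>x. if x \<le> x2 then L x else p * u2 x)"
  define ut where "ut = (\<lambda>x. if x \<le> x1 then u1 x else g x)"
  define g' where "g' = (\<lambda>x. if x \<le> x2 then u1' x1 else p * u2' x)"
  define ut' where "ut' = (\<lambda>x. if x \<le> x1 then u1' x else g' x)"
  have Ld: "(L has_vector_derivative u1' x1) (at x within X)" for x X
    unfolding L_def by (auto intro!: derivative_eq_intros)
  have u2p: "((\<lambda>x. p * u2 x) has_vector_derivative p * u2' x) (at x within {a..b})" if "x \<in> {a..b}" for x
    using has_vector_derivative_mult_right[OF u2_d1[OF that]] .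
  have x1S: "x1 \<in> {a..b}" and x2S: "x2 \<in> {a..b}" using x1ab x2ab by (auto simp:)
  have D1: "(ut has_vector_derivative ut' x) (at x within {a..b})" if x: "x \<in> {a..b}" for x
  proof -
    consider "x < x1" | "x = x1" | "x1 < x \<and> x < x2" | "x = x2" | "x2 < x" by linarith
    then show ?thesis
    proof cases
      case 1
      have "(ut has_vector_derivative u1' x) (at x within {a..b})"
        by (rule has_vector_derivative_transform_within[OF u1_d1[OF x], of "x1 - x"])
           (use 1 x in \<open>auto simp: ut_def dist_real_def\<close>)
      then show ?thesis using 1 by (simp add: ut'_def)
    next
      case 2
      have gd: "(g has_vector_derivative u1' x1) (at x1 within {a..b} \<inter> {x1..})"
        by (rule has_vector_derivative_transform_within[OF Ld, of "x2 - x1"])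
           (use xx x1S in \<open>auto simp: g_def dist_real_def\<close>)
      have ud: "(u1 has_vector_derivative u1' x1) (at x1 within {a..b} \<inter> {..x1})"
        by (rule has_vector_derivative_within_subset[OF u1_d1[OF x1ab]]) (auto simp:)
      have "(ut has_vector_derivative u1' x1) (at x1 within {a..b})"
        unfolding ut_def by (rule glue_at[OF x1S ud gd]) (use xx in \<open>simp add: g_def L_def\<close>)
      then show ?thesis using 2 by (simp add: ut'_def)
    next
      case 3
      have "(ut has_vector_derivative u1' x1) (at x within {a..b})"
        by (rule has_vector_derivative_transform_within[OF Ld, of "min (x - x1) (x2 - x)"])
           (use 3 x in \<open>auto simp: ut_def g_def dist_real_def\<close>)
      then show ?thesis using 3 by (simp add: ut'_def g'_def)
    next
      case 4
      have Ld2: "(L has_vector_derivative u1' x1) (at x2 within {a..b} \<inter> {..x2})" by (rule Ld)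
      have pd: "((\<lambda>x. p * u2 x) has_vector_derivative u1' x1) (at x2 within {a..b} \<inter> {x2..})"
        unfolding mp1[symmetric] by (rule has_vector_derivative_within_subset[OF u2p[OF x2S]]) auto
      have gd2: "(g has_vector_derivative u1' x1) (at x2 within {a..b})"
        unfolding g_def by (rule glue_at[OF x2S Ld2 pd]) (simp add: L_def mp0)
      have "(ut has_vector_derivative u1' x1) (at x2 within {a..b})"
        by (rule has_vector_derivative_transform_within[OF gd2, of "x2 - x1"])
           (use xx x2S in \<open>auto simp: ut_def dist_real_def\<close>)
      then show ?thesis using 4 xx by (simp add: ut'_def g'_def)
    next
      case 5
      have "(ut has_vector_derivative p * u2' x) (at x within {a..b})"
        by (rule has_vector_derivative_transform_within[OF u2p[OF x], of "x - x2"])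
           (use 5 xx x in \<open>auto simp: ut_def g_def dist_real_def\<close>)
      then show ?thesis using 5 xx by (simp add: ut'_def g'_def)
    qed
  qed
  have D2: "(ut' has_vector_derivative
                 (- (complex_of_real (\<omega>\<^sup>2 - (if x \<in> {x1..x2} then \<omega>\<^sup>2 else 0)) * ut x)))
                (at x within {a..b})" if x: "x \<in> {a..b} - {x1, x2}" for x
  proof -
    have xS: "x \<in> {a..b}" using x by simp
    consider "x < x1" | "x1 < x \<and> x < x2" | "x2 < x" using x by force
    then show ?thesis
    proof cases
      case 1
      have "(ut' has_vector_derivative - (complex_of_real (\<omega>\<^sup>2) * u1 x)) (at x within {a..b})"
        by (rule has_vector_derivative_transform_within[OF u1_d2[OF xS], of "x1 - x"])
           (use 1 xS in \<open>auto simp: ut'_def dist_real_def\<close>)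
      then show ?thesis using 1 by (simp add: ut_def)
    next
      case 2
      have "(ut' has_vector_derivative 0) (at x within {a..b})"
        by (rule has_vector_derivative_transform_within[OF has_vector_derivative_const[of "u1' x1"], of "min (x - x1) (x2 - x)"])
           (use 2 xS in \<open>auto simp: ut'_def g'_def dist_real_def\<close>)
      then show ?thesis using 2 by simp
    next
      case 3
      have pd3: "((\<lambda>x. p * u2' x) has_vector_derivative p * (- (complex_of_real (\<omega>\<^sup>2) * u2 x))) (at x within {a..b})"
        using has_vector_derivative_mult_right[OF u2_d2[OF xS]] .
      have "(ut' has_vector_derivative p * (- (complex_of_real (\<omega>\<^sup>2) * u2 x))) (at x within {a..b})"
        by (rule has_vector_derivative_transform_within[OF pd3, of "x - x2"])
           (use 3 xx xS in \<open>auto simp: ut'_def g'_def dist_real_def\<close>)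
      then show ?thesis using 3 xx by (simp add: ut_def g_def algebra_simps)
    qed
  qed
  have cu1': "continuous_on {a..b} u1'" by (rule continuous_on_vector_derivative[OF u1_d2])
  have cu2': "continuous_on {a..b} u2'" by (rule continuous_on_vector_derivative[OF u2_d2])
  have cg': "continuous_on {x \<in> {a..b}. x1 \<le> x} g'"
    unfolding g'_def
    by (rule continuous_on_cases_le[where h="\<lambda>x. x"])
       (auto intro!: continuous_intros continuous_on_subset[OF cu2'] simp: mp1)
  have cut': "continuous_on {a..b} ut'"
    unfolding ut'_def
    apply (rule continuous_on_cases_le[where h="\<lambda>x. x"])
       apply (rule continuous_on_subset[OF cu1'])
       apply blast
      apply (rule cg')
     apply (rule continuous_on_id)
    using xx apply (simp add: g'_def)
    done
  have E1: "\<forall>x\<in>{a..x1}. ut x = u1 x" by (simp add: ut_def)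
  have E2: "\<forall>x\<in>{x2..b}. ut x = exp (\<i> * complex_of_real th) * u2 x"
    using xx mp0 by (auto simp: ut_def g_def L_def thp)
  show ?thesis
    using th xx x1T x2T D1 cut' D2 E1 E2 by blast
qed



theorem lemma4p3:
  fixes \<omega> L0 C0 a b x0 :: real
    and u1 u1' u2 u2' :: "real \<Rightarrow> complex"
  defines "T \<equiv> 2 * pi / \<bar>\<omega>\<bar> + pi * C0\<^sup>2 / \<bar>L0\<bar>"
  assumes "\<omega> \<noteq> 0" and "L0 \<noteq> 0" and "C0 > 0" and "a < b"
    and "b - a > T + 2"
    and u1_d1: "\<And>x. x \<in> {a..b} \<Longrightarrow> (u1 has_vector_derivative u1' x) (at x within {a..b})"
    and u1_d2: "\<And>x. x \<in> {a..b} \<Longrightarrow>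
                  (u1' has_vector_derivative (- (complex_of_real (\<omega>\<^sup>2) * u1 x))) (at x within {a..b})"
    and u2_d1: "\<And>x. x \<in> {a..b} \<Longrightarrow> (u2 has_vector_derivative u2' x) (at x within {a..b})"
    and u2_d2: "\<And>x. x \<in> {a..b} \<Longrightarrow>
                  (u2' has_vector_derivative (- (complex_of_real (\<omega>\<^sup>2) * u2 x))) (at x within {a..b})"
    and L1: "\<And>x. x \<in> {a..b} \<Longrightarrow> Im (u1' x * cnj (u1 x)) = L0"
    and L2: "\<And>x. x \<in> {a..b} \<Longrightarrow> Im (u2' x * cnj (u2 x)) = L0"
    and bound: "\<And>x. x \<in> {a..b} \<Longrightarrow> cmod (u1 x) + cmod (u2 x) \<le> C0"
    and nonconst: "\<not> (\<exists>c. \<forall>x\<in>{a..b}. u1 x / u2 x = c)"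
    and x0: "x0 \<in> {a..b}" and sub: "{x0..x0 + T} \<subseteq> {a<..<b}"
  shows "\<exists>\<theta>2 x1 x2 ut ut'.
           \<theta>2 \<in> {0..<2*pi} \<and> x1 < x2 \<and> x1 \<in> {x0..x0 + T} \<and> x2 \<in> {x0..x0 + T} \<and>
           (\<forall>x\<in>{a..b}. (ut has_vector_derivative ut' x) (at x within {a..b})) \<and>
           continuous_on {a..b} ut' \<and>
           (\<forall>x\<in>{a..b} - {x1, x2}.
              (ut' has_vector_derivative
                 (- (complex_of_real (\<omega>\<^sup>2 - (if x \<in> {x1..x2} then \<omega>\<^sup>2 else 0)) * ut x)))
                (at x within {a..b})) \<and>
           (\<forall>x\<in>{a..x1}. ut x = u1 x) \<and>
           (\<forall>x\<in>{x2..b}. ut x = exp (\<i> * complex_of_real \<theta>2) * u2 x)"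
proof (cases "L0 < 0")
  case True
  show ?thesis unfolding T_def by (rule main_neg[OF assms(2-)[unfolded T_def] True])
next
  case False
  then have pos: "L0 > 0" using assms(3) by simp
  let ?v1 = "\<lambda>x. cnj (u1 x)" and ?v1' = "\<lambda>x. cnj (u1' x)"
  let ?v2 = "\<lambda>x. cnj (u2 x)" and ?v2' = "\<lambda>x. cnj (u2' x)"
  have T': "T = 2 * pi / \<bar>\<omega>\<bar> + pi * C0\<^sup>2 / \<bar>-L0\<bar>" unfolding T_def by simp
  have d1: "(?v1 has_vector_derivative ?v1' x) (at x within {a..b})" if "x \<in> {a..b}" for x
    by (rule has_vector_derivative_cnj[OF u1_d1[OF that]])
  have d2: "(?v1' has_vector_derivative (- (complex_of_real (\<omega>\<^sup>2) * ?v1 x))) (at x within {a..b})" if "x \<in> {a..b}" for x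
    using has_vector_derivative_cnj[OF u1_d2[OF that]] by simp
  have d3: "(?v2 has_vector_derivative ?v2' x) (at x within {a..b})" if "x \<in> {a..b}" for x
    by (rule has_vector_derivative_cnj[OF u2_d1[OF that]])
  have d4: "(?v2' has_vector_derivative (- (complex_of_real (\<omega>\<^sup>2) * ?v2 x))) (at x within {a..b})" if "x \<in> {a..b}" for x
    using has_vector_derivative_cnj[OF u2_d2[OF that]] by simp
  have l1: "Im (?v1' x * cnj (?v1 x)) = - L0" if "x \<in> {a..b}" for x
  proof -
    have "?v1' x * cnj (?v1 x) = cnj (u1' x * cnj (u1 x))" by simp
    then show ?thesis using L1[OF that] by (simp del: complex_cnj_mult)
  qed
  have l2: "Im (?v2' x * cnj (?v2 x)) = - L0" if "x \<in> {a..b}" for x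
  proof -
    have "?v2' x * cnj (?v2 x) = cnj (u2' x * cnj (u2 x))" by simp
    then show ?thesis using L2[OF that] by (simp del: complex_cnj_mult)
  qed
  have bd: "cmod (?v1 x) + cmod (?v2 x) \<le> C0" if "x \<in> {a..b}" for x using bound[OF that] by simp
  have nc: "\<not> (\<exists>c. \<forall>x\<in>{a..b}. ?v1 x / ?v2 x = c)"
  proof
    assume "\<exists>c. \<forall>x\<in>{a..b}. ?v1 x / ?v2 x = c"
    then obtain c where c: "\<And>x. x\<in>{a..b} \<Longrightarrow> cnj (u1 x) / cnj (u2 x) = c" by blast
    have "\<forall>x\<in>{a..b}. u1 x / u2 x = cnj c"
    proof
      fix x assume x: "x \<in> {a..b}"
      have "cnj (u1 x / u2 x) = c" using c[OF x] by (simp add: complex_cnj_divide)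
      then show "u1 x / u2 x = cnj c" by (metis complex_cnj_cnj)
    qed
    then show False using nonconst by blast
  qed
  have neg: "- L0 < 0" using pos by simp
  obtain th x1 x2 ut ut' where R:
    "th \<in> {0..<2*pi}" "x1 < x2" "x1 \<in> {x0..x0 + T}" "x2 \<in> {x0..x0 + T}"
    "\<forall>x\<in>{a..b}. (ut has_vector_derivative ut' x) (at x within {a..b})"
    "continuous_on {a..b} ut'"
    "\<forall>x\<in>{a..b} - {x1, x2}.
              (ut' has_vector_derivative
                 (- (complex_of_real (\<omega>\<^sup>2 - (if x \<in> {x1..x2} then \<omega>\<^sup>2 else 0)) * ut x)))
                (at x within {a..b})"
    "\<forall>x\<in>{a..x1}. ut x = ?v1 x"
    "\<forall>x\<in>{x2..b}. ut x = exp (\<i> * complex_of_real th) * ?v2 x"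
    using main_neg[of \<omega> "-L0" C0 a b ?v1 ?v1' ?v2 ?v2' x0, OF assms(2) _ assms(4,5) _ d1 d2 d3 d4 l1 l2 bd nc x0 _ neg]
      assms(3,6) sub unfolding T' by auto
  define th' where "th' = (if th = 0 then 0 else 2*pi - th)"
  have th': "th' \<in> {0..<2*pi}" using R(1) unfolding th'_def by auto
  have eth: "cnj (exp (\<i> * complex_of_real th)) = exp (\<i> * complex_of_real th')"
  proof -
    have "cis (-th) = cis th'"
    proof (cases "th = 0")
      case True then show ?thesis unfolding th'_def by simp
    next
      case False
      have "2*pi - th = -th + 2 * pi * of_int 1" by simp
      then have "cis th' = cis (-th + 2 * pi * of_int 1)" unfolding th'_def using False by simp
      then show ?thesis by (simp only: cis_add_2piK)
    qed
    then have "cnj (cis th) = cis th'" by (simp add: cis_cnj)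
    then show ?thesis by (simp add: cis_conv_exp)
  qed
  show ?thesis
  proof (intro exI conjI)
    show "th' \<in> {0..<2*pi}" by (rule th')
    show "x1 < x2" "x1 \<in> {x0..x0 + T}" "x2 \<in> {x0..x0 + T}" using R by auto
    show "\<forall>x\<in>{a..b}. ((\<lambda>x. cnj (ut x)) has_vector_derivative cnj (ut' x)) (at x within {a..b})"
      using R(5) by (auto intro: has_vector_derivative_cnj)
    show "continuous_on {a..b} (\<lambda>x. cnj (ut' x))" using R(6) by (intro continuous_intros)
    show "\<forall>x\<in>{a..b} - {x1, x2}.
              ((\<lambda>x. cnj (ut' x)) has_vector_derivative
                 (- (complex_of_real (\<omega>\<^sup>2 - (if x \<in> {x1..x2} then \<omega>\<^sup>2 else 0)) * cnj (ut x))))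
                (at x within {a..b})"
    proof
      fix x assume x: "x \<in> {a..b} - {x1, x2}"
      show "((\<lambda>x. cnj (ut' x)) has_vector_derivative
                 (- (complex_of_real (\<omega>\<^sup>2 - (if x \<in> {x1..x2} then \<omega>\<^sup>2 else 0)) * cnj (ut x))))
                (at x within {a..b})"
        using has_vector_derivative_cnj[OF R(7)[rule_format, OF x]] by simp
    qed
    show "\<forall>x\<in>{a..x1}. cnj (ut x) = u1 x" using R(8) by simp
    show "\<forall>x\<in>{x2..b}. cnj (ut x) = exp (\<i> * complex_of_real th') * u2 x"
      using R(9) eth by (simp flip: eth)
  qed
qed

end
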